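(* For every integer $N\ge1$ there exists $C=C(\lambda,N)>1$ such that the following holds. Let $\nu\in\mathcal{M}(\mathbb{R}^{d})$, $0<\beta<1/2$ and $t_{2}>t_{1}>0$ with $t_{2}-t_{1}>3N-\frac{1}{\log\lambda_{1}}$ and $\frac{1}{t_{2}-t_{1}}H(\nu;\lambda^{t_{2}}\mid\lambda^{t_{1}})>\beta$. Set $\tau_{1}:=\lceil\frac{t_{1}}{N}+1-\frac{1}{N\log\lambda_{1}}\rceil$ and $\tau_{2}:=\lfloor\frac{t_{2}}{N}\rfloor$, and let $\mathcal{N}$ be the set of all integers $\tau_{1}\le n<\tau_{2}$ such that \[ H(\nu;s_{Nn}\mid s_{Nn-N})\ge\max\Big\{\tfrac{2}{3}H(\nu;s_{Nn+N}\mid s_{Nn}),\tfrac{\beta}{6}\Big\}. \] Then $\sum_{n\in\mathcal{N}}H(\nu;s_{Nn}\mid s_{Nn-N})\ge\frac{\beta}{6}(t_{2}-t_{1})-C$.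
   Context: Fix $d\ge1$ and $\lambda=(\lambda_1,\dots,\lambda_d)\in(0,1)^d$ with $\lambda_1>\dots>\lambda_d$; logs base 2; $\lambda^t:=(\lambda_1^t,\dots,\lambda_d^t)$. $\mathcal{M}(\mathbb{R}^d)$: compactly supported Borel probability measures. Sequence $s_n=(s_{n,1},\dots,s_{n,d})$: $s_{0,j}=1$, $s_{n+1,j}=s_{n,j}/b_{n+1,j}$, where $b_{n+1,j}$ is the unique positive integer with $s_{n,j}/b_{n+1,j}\ge\lambda_j^{n+1}>s_{n,j}/(1+b_{n+1,j})$. Average entropy: for $\mu$ the law of bounded $X$ and $r\in\mathbb{R}^d_{>0}$, $H(\mu;r):=\int_{[0,1)^d}H(\lfloor X/r+x\rfloor)dx$ (coordinatewise division/floor, Shannon entropy) and $H(\mu;r\mid r'):=H(\mu;r)-H(\mu;r')$. *)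

theory Defs
  imports "HOL-Analysis.Analysis" "HOL-Probability.Probability"
begin

text \<open>Coordinates are indexed by a finite linearly ordered type 'd (so d = CARD('d)).\<close>

definition admissible_lambda :: "real^'d::{finite,linorder} \<Rightarrow> bool" where
  "admissible_lambda lam \<longleftrightarrow> (\<forall>i. 0 < lam$i \<and> lam$i < 1) \<and> (\<forall>i j. i < j \<longrightarrow> lam$j < lam$i)"

definition lam1 :: "real^'d::{finite,linorder} \<Rightarrow> real" where
  "lam1 lam = lam $ (LEAST i. True)"

definition vpowr :: "real^'d::finite \<Rightarrow> real \<Rightarrow> real^'d" where
  "vpowr lam t = (\<chi> i. (lam$i) powr t)"

definition cpt_prob :: "(real^'d::finite) measure \<Rightarrow> bool" where
  "cpt_prob \<nu> \<longleftrightarrow> prob_space \<nu> \<and> sets \<nu> = sets borel \<and>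
     (\<exists>K. compact K \<and> emeasure \<nu> K = 1)"

fun seq_s :: "real^'d::finite \<Rightarrow> nat \<Rightarrow> real^'d" where
  "seq_s lam 0 = (\<chi> j. 1)"
| "seq_s lam (Suc n) = (\<chi> j. seq_s lam n $ j /
     real (THE b::nat. 0 < b \<and> seq_s lam n $ j / real b \<ge> (lam$j) ^ Suc n
                    \<and> (lam$j) ^ Suc n > seq_s lam n $ j / (1 + real b)))"

definition floor_ent :: "(real^'d::finite) measure \<Rightarrow> real^'d \<Rightarrow> real^'d \<Rightarrow> real" where
  "floor_ent \<mu> r x =
     infsum (\<lambda>k::int^'d. let p = measure \<mu> {y \<in> space \<mu>. (\<chi> i. \<lfloor>y$i / r$i + x$i\<rfloor>) = k}
                        in if p = 0 then 0 else - p * log 2 p) UNIV"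

definition avg_ent :: "(real^'d::finite) measure \<Rightarrow> real^'d \<Rightarrow> real" where
  "avg_ent \<mu> r = (LINT x : {x. \<forall>i. 0 \<le> x$i \<and> x$i < 1} | lborel. floor_ent \<mu> r x)"

definition cond_ent :: "(real^'d::finite) measure \<Rightarrow> real^'d \<Rightarrow> real^'d \<Rightarrow> real" where
  "cond_ent \<mu> r r' = avg_ent \<mu> r - avg_ent \<mu> r'"

end

theory Submission
  imports Defs
begin


definition phi :: "real \<Rightarrow> real" where
  "phi p = (if p = 0 then 0 else - p * log 2 p)"

lemma phi_nonneg: "0 \<le> p \<Longrightarrow> p \<le> 1 \<Longrightarrow> 0 \<le> phi p"
  unfolding phi_def by (auto simp: mult_le_0_iff)

lemma phi_subadd:
  assumes "0 \<le> a" "0 \<le> b" shows "phi (a + b) \<le> phi a + phi b"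
proof (cases "a = 0 \<or> b = 0")
  case True then show ?thesis by (auto simp: phi_def)
next
  case False
  then have a: "a > 0" and b: "b > 0" using assms by auto
  have "log 2 a \<le> log 2 (a+b)" using a b by simp
  then have 1: "- a * log 2 (a+b) \<le> - a * log 2 a" using a by (simp add: mult_left_mono)
  have "log 2 b \<le> log 2 (a+b)" using a b by simp
  then have 2: "- b * log 2 (a+b) \<le> - b * log 2 b" using b by (simp add: mult_left_mono)
  have "phi (a+b) = - a * log 2 (a+b) - b * log 2 (a+b)" using a b by (simp add: phi_def algebra_simps)
  moreover have "phi a = - a * log 2 a" "phi b = - b * log 2 b" using a b by (auto simp: phi_def)
  ultimately show ?thesis using 1 2 by linarith
qed

lemma phi_sum:
  assumes "finite S" "\<And>x. x \<in> S \<Longrightarrow> 0 \<le> f x"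
  shows "phi (sum f S) \<le> (\<Sum>x\<in>S. phi (f x))"
  using assms
proof (induction S rule: finite_induct)
  case empty then show ?case by (simp add: phi_def)
next
  case (insert x F)
  have "phi (sum f (insert x F)) = phi (f x + sum f F)" using insert by simp
  also have "\<dots> \<le> phi (f x) + phi (sum f F)"
    by (rule phi_subadd) (auto intro: insert sum_nonneg)
  also have "\<dots> \<le> phi (f x) + (\<Sum>y\<in>F. phi (f y))" using insert by simp
  finally show ?case using insert by simp
qed

lemma fiber:
  fixes p :: "'a \<Rightarrow> real" and M :: real
  assumes T: "finite T" and nn: "\<And>a. a \<in> T \<Longrightarrow> 0 \<le> p a"
    and cM: "real (card {a\<in>T. p a \<noteq> 0}) \<le> M"
  shows "(\<Sum>a\<in>T. phi (p a)) \<le> phi (sum p T) + sum p T * log 2 M"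
proof -
  define T' where "T' = {a\<in>T. p a \<noteq> 0}"
  have fT': "finite T'" using T by (simp add: T'_def)
  have s1: "(\<Sum>a\<in>T. phi (p a)) = (\<Sum>a\<in>T'. phi (p a))"
    using T by (intro sum.mono_neutral_right) (auto simp: T'_def phi_def)
  have s2: "sum p T = sum p T'"
    using T by (intro sum.mono_neutral_right) (auto simp: T'_def)
  have pos: "\<And>a. a \<in> T' \<Longrightarrow> 0 < p a" using nn by (force simp: T'_def)
  show ?thesis
  proof (cases "T' = {}")
    case True
    then show ?thesis using s1 s2 by (simp add: phi_def)
  next
    case False
    define q where "q = sum p T'"
    have qpos: "q > 0" unfolding q_def using False fT' pos by (intro sum_pos) auto
    have "card T' \<ge> 1" using False fT' by (simp add: Suc_le_eq card_gt_0_iff)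
    then have M1: "M \<ge> 1" using cM by (simp add: T'_def)
    have key: "phi (p a) \<le> p a * (- log 2 q) + p a * log 2 M + (q / M - p a) / ln 2"
      if a: "a \<in> T'" for a
    proof -
      have pa: "p a > 0" using pos a by auto
      have z: "q / (M * p a) > 0" using qpos M1 pa by simp
      have "ln (q / (M * p a)) \<le> q / (M * p a) - 1" by (rule ln_le_minus_one[OF z])
      then have "p a * ln (q / (M * p a)) \<le> p a * (q / (M * p a) - 1)"
        using pa by (simp add: mult_left_mono)
      also have "\<dots> = q / M - p a" using pa M1 by (simp add: field_simps)
      finally have i: "p a * ln (q / (M * p a)) \<le> q / M - p a" .
      have "ln (q / (M * p a)) = ln q - ln M - ln (p a)"
        using qpos M1 pa by (simp add: ln_div ln_mult)
      then have i2: "p a * (ln q - ln M - ln (p a)) \<le> q / M - p a" using i by simp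
      have l2: "ln 2 > (0::real)" by simp
      have "p a * (ln q - ln M - ln (p a)) / ln 2 \<le> (q / M - p a) / ln 2"
        using i2 l2 by (simp add: divide_right_mono)
      then show ?thesis using pa
        by (simp add: phi_def log_def field_simps)
    qed
    have "(\<Sum>a\<in>T'. phi (p a)) \<le> (\<Sum>a\<in>T'. p a * (- log 2 q) + p a * log 2 M + (q / M - p a) / ln 2)"
      by (rule sum_mono) (rule key)
    also have "\<dots> = q * (- log 2 q) + q * log 2 M + (real (card T') * q / M - q) / ln 2"
      by (simp add: sum.distrib sum_distrib_right[symmetric] q_def sum_divide_distrib[symmetric] sum_subtractf)
    also have "\<dots> \<le> q * (- log 2 q) + q * log 2 M"
    proof -
      have "real (card T') * q / M \<le> M * q / M" using cM qpos M1
        by (intro divide_right_mono mult_right_mono) (auto simp: T'_def)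
      then have "real (card T') * q / M - q \<le> 0" using M1 by simp
      then show ?thesis by (simp add: divide_nonpos_pos)
    qed
    also have "\<dots> = phi q + q * log 2 M" using qpos by (simp add: phi_def)
    finally show ?thesis using s1 s2 q_def by simp
  qed
qed

lemma ent_compare:
  fixes \<nu> :: "'a measure" and F G :: "'a \<Rightarrow> 'k" and M :: real
  assumes ps: "prob_space \<nu>" and K: "K \<in> sets \<nu>" "measure \<nu> K = 1"
    and mF: "\<And>k. {y\<in>space \<nu>. F y = k} \<in> sets \<nu>"
    and mG: "\<And>k. {y\<in>space \<nu>. G y = k} \<in> sets \<nu>"
    and fin: "finite TF" "finite TG"
    and inF: "\<And>y. y \<in> K \<Longrightarrow> F y \<in> TF" and inG: "\<And>y. y \<in> K \<Longrightarrow> G y \<in> TG"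
    and card: "\<And>b. real (card {F y | y. y \<in> K \<and> G y = b}) \<le> M"
    and M1: "M \<ge> 1"
  shows "infsum (\<lambda>k. phi (measure \<nu> {y\<in>space \<nu>. F y = k})) UNIV
       \<le> infsum (\<lambda>k. phi (measure \<nu> {y\<in>space \<nu>. G y = k})) UNIV + log 2 M"
proof -
  interpret prob_space \<nu> by fact
  have Ksp: "K \<subseteq> space \<nu>" using K(1) sets.sets_into_space by auto
  have "measure \<nu> (space \<nu> - K) = 0" using prob_compl[OF K(1)] K(2) by simp
  then have null: "space \<nu> - K \<in> null_sets \<nu>"
    using K(1) by (simp add: emeasure_eq_measure null_sets_def)
  have restr: "measure \<nu> A = measure \<nu> (A \<inter> K)" if A: "A \<in> sets \<nu>" for A
  proof -
    have "A - (space \<nu> - K) = A \<inter> K" using sets.sets_into_space[OF A] by auto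
    then show ?thesis using measure_Diff_null_set[OF A null] by simp
  qed
  define pJ where "pJ a b = measure \<nu> {y\<in>space \<nu>. F y = a \<and> G y = b}" for a b
  have mJ: "{y\<in>space \<nu>. F y = a \<and> G y = b} \<in> sets \<nu>" for a b
  proof -
    have "{y\<in>space \<nu>. F y = a \<and> G y = b} = {y\<in>space \<nu>. F y = a} \<inter> {y\<in>space \<nu>. G y = b}" by auto
    then show ?thesis using mF mG by auto
  qed
  have pJnn: "0 \<le> pJ a b" for a b by (simp add: pJ_def)
  have sumF: "measure \<nu> {y\<in>space \<nu>. F y = a} = (\<Sum>b\<in>TG. pJ a b)" for a
  proof -
    have "(\<Sum>b\<in>TG. pJ a b) = measure \<nu> (\<Union>b\<in>TG. {y\<in>space \<nu>. F y = a \<and> G y = b})"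
      unfolding pJ_def using fin mJ
      by (intro finite_measure_finite_Union[symmetric]) (auto simp: disjoint_family_on_def)
    also have "\<dots> = measure \<nu> ((\<Union>b\<in>TG. {y\<in>space \<nu>. F y = a \<and> G y = b}) \<inter> K)"
      using fin mJ by (intro restr) auto
    also have "(\<Union>b\<in>TG. {y\<in>space \<nu>. F y = a \<and> G y = b}) \<inter> K = {y\<in>space \<nu>. F y = a} \<inter> K"
      using inG by auto
    also have "measure \<nu> \<dots> = measure \<nu> {y\<in>space \<nu>. F y = a}" using restr[OF mF] by simp
    finally show ?thesis by simp
  qed
  have sumG: "measure \<nu> {y\<in>space \<nu>. G y = b} = (\<Sum>a\<in>TF. pJ a b)" for b
  proof -
    have "(\<Sum>a\<in>TF. pJ a b) = measure \<nu> (\<Union>a\<in>TF. {y\<in>space \<nu>. F y = a \<and> G y = b})"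
      unfolding pJ_def using fin mJ
      by (intro finite_measure_finite_Union[symmetric]) (auto simp: disjoint_family_on_def)
    also have "\<dots> = measure \<nu> ((\<Union>a\<in>TF. {y\<in>space \<nu>. F y = a \<and> G y = b}) \<inter> K)"
      using fin mJ by (intro restr) auto
    also have "(\<Union>a\<in>TF. {y\<in>space \<nu>. F y = a \<and> G y = b}) \<inter> K = {y\<in>space \<nu>. G y = b} \<inter> K"
      using inF by auto
    also have "measure \<nu> \<dots> = measure \<nu> {y\<in>space \<nu>. G y = b}" using restr[OF mG] by simp
    finally show ?thesis by simp
  qed
  have zF: "measure \<nu> {y\<in>space \<nu>. F y = a} = 0" if "a \<notin> TF" for a
  proof -
    have "{y\<in>space \<nu>. F y = a} \<inter> K = {}" using inF that by auto
    then show ?thesis using restr[OF mF] by simp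
  qed
  have zG: "measure \<nu> {y\<in>space \<nu>. G y = b} = 0" if "b \<notin> TG" for b
  proof -
    have "{y\<in>space \<nu>. G y = b} \<inter> K = {}" using inG that by auto
    then show ?thesis using restr[OF mG] by simp
  qed
  have iF: "infsum (\<lambda>k. phi (measure \<nu> {y\<in>space \<nu>. F y = k})) UNIV
      = (\<Sum>a\<in>TF. phi (measure \<nu> {y\<in>space \<nu>. F y = a}))"
  proof -
    have "infsum (\<lambda>k. phi (measure \<nu> {y\<in>space \<nu>. F y = k})) UNIV
        = infsum (\<lambda>k. phi (measure \<nu> {y\<in>space \<nu>. F y = k})) TF"
      by (rule infsum_cong_neutral) (auto simp: zF phi_def)
    then show ?thesis using fin by simp
  qed
  have iG: "infsum (\<lambda>k. phi (measure \<nu> {y\<in>space \<nu>. G y = k})) UNIV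
      = (\<Sum>b\<in>TG. phi (measure \<nu> {y\<in>space \<nu>. G y = b}))"
  proof -
    have "infsum (\<lambda>k. phi (measure \<nu> {y\<in>space \<nu>. G y = k})) UNIV
        = infsum (\<lambda>k. phi (measure \<nu> {y\<in>space \<nu>. G y = k})) TG"
      by (rule infsum_cong_neutral) (auto simp: zG phi_def)
    then show ?thesis using fin by simp
  qed
  have "(\<Sum>a\<in>TF. phi (measure \<nu> {y\<in>space \<nu>. F y = a})) = (\<Sum>a\<in>TF. phi (\<Sum>b\<in>TG. pJ a b))"
    by (simp add: sumF)
  also have "\<dots> \<le> (\<Sum>a\<in>TF. \<Sum>b\<in>TG. phi (pJ a b))"
    by (intro sum_mono phi_sum fin pJnn)
  also have "\<dots> = (\<Sum>b\<in>TG. \<Sum>a\<in>TF. phi (pJ a b))" by (rule sum.swap)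
  also have "\<dots> \<le> (\<Sum>b\<in>TG. phi (\<Sum>a\<in>TF. pJ a b) + (\<Sum>a\<in>TF. pJ a b) * log 2 M)"
  proof (rule sum_mono)
    fix b assume "b \<in> TG"
    have sub: "{a\<in>TF. pJ a b \<noteq> 0} \<subseteq> {F y | y. y \<in> K \<and> G y = b}"
    proof
      fix a assume "a \<in> {a\<in>TF. pJ a b \<noteq> 0}"
      then have "pJ a b \<noteq> 0" by simp
      then have "measure \<nu> ({y\<in>space \<nu>. F y = a \<and> G y = b} \<inter> K) \<noteq> 0"
        using restr[OF mJ] by (simp add: pJ_def)
      then have "{y\<in>space \<nu>. F y = a \<and> G y = b} \<inter> K \<noteq> {}" by (metis measure_empty)
      then obtain y where "y \<in> K" "F y = a" "G y = b" by blast
      then show "a \<in> {F y | y. y \<in> K \<and> G y = b}" by auto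
    qed
    have "finite {F y | y. y \<in> K \<and> G y = b}"
      by (rule finite_subset[OF _ fin(1)]) (auto intro: inF)
    then have "card {a\<in>TF. pJ a b \<noteq> 0} \<le> card {F y | y. y \<in> K \<and> G y = b}"
      using sub by (intro card_mono)
    then have "real (card {a\<in>TF. pJ a b \<noteq> 0}) \<le> M" using card[of b] by linarith
    then show "(\<Sum>a\<in>TF. phi (pJ a b)) \<le> phi (\<Sum>a\<in>TF. pJ a b) + (\<Sum>a\<in>TF. pJ a b) * log 2 M"
      by (intro fiber fin pJnn)
  qed
  also have "\<dots> = (\<Sum>b\<in>TG. phi (measure \<nu> {y\<in>space \<nu>. G y = b})) + (\<Sum>b\<in>TG. measure \<nu> {y\<in>space \<nu>. G y = b}) * log 2 M"
    by (simp add: sumG sum.distrib sum_distrib_right)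
  also have "\<dots> \<le> (\<Sum>b\<in>TG. phi (measure \<nu> {y\<in>space \<nu>. G y = b})) + log 2 M"
  proof -
    have "(\<Sum>b\<in>TG. measure \<nu> {y\<in>space \<nu>. G y = b}) = measure \<nu> (\<Union>b\<in>TG. {y\<in>space \<nu>. G y = b})"
      using fin mG by (intro finite_measure_finite_Union[symmetric]) (auto simp: disjoint_family_on_def)
    also have "\<dots> \<le> 1" by simp
    finally have "(\<Sum>b\<in>TG. measure \<nu> {y\<in>space \<nu>. G y = b}) \<le> 1" .
    moreover have "log 2 M \<ge> 0" using M1 by simp
    ultimately show ?thesis by (simp add: mult_left_le_one_le sum_nonneg)
  qed
  finally show ?thesis using iF iG by simp
qed

lemma vec_nth_meas[measurable]: "(\<lambda>x::real^'d::finite. x$i) \<in> borel_measurable borel"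
  by (intro borel_measurable_continuous_onI linear_continuous_on bounded_linear_vec_nth)

lemma box_vec:
  fixes A :: "'d::finite \<Rightarrow> int set"
  assumes "\<And>i. finite (A i)"
  shows "finite {k::int^'d. \<forall>i. k$i \<in> A i}" "card {k::int^'d. \<forall>i. k$i \<in> A i} = (\<Prod>i\<in>UNIV. card (A i))"
proof -
  have e: "{k::int^'d. \<forall>i. k$i \<in> A i} = vec_lambda ` (PiE UNIV A)"
  proof
    show "{k::int^'d. \<forall>i. k$i \<in> A i} \<subseteq> vec_lambda ` (PiE UNIV A)"
    proof
      fix k :: "int^'d" assume "k \<in> {k::int^'d. \<forall>i. k$i \<in> A i}"
      then have "(\<lambda>i. k$i) \<in> PiE UNIV A" by auto
      moreover have "k = vec_lambda (\<lambda>i. k$i)" by simp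
      ultimately show "k \<in> vec_lambda ` (PiE UNIV A)" by blast
    qed
  qed auto
  have inj: "inj_on vec_lambda (PiE UNIV A)" by (auto simp: inj_on_def vec_lambda_inject)
  show "finite {k::int^'d. \<forall>i. k$i \<in> A i}" unfolding e using assms by (intro finite_imageI finite_PiE) auto
  show "card {k::int^'d. \<forall>i. k$i \<in> A i} = (\<Prod>i\<in>UNIV. card (A i))"
    unfolding e by (simp add: card_image[OF inj] card_PiE)
qed

lemma floor_ent_phi:
  "floor_ent \<nu> r x = infsum (\<lambda>k. phi (measure \<nu> {y\<in>space \<nu>. (\<chi> i. \<lfloor>y$i / r$i + x$i\<rfloor>) = k})) UNIV"
  unfolding floor_ent_def phi_def Let_def by simp

lemma cpt_facts:
  fixes \<nu> :: "(real^'d::finite) measure"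
  assumes "cpt_prob \<nu>"
  obtains K B where "prob_space \<nu>" "sets \<nu> = sets borel" "space \<nu> = UNIV" "K \<in> sets \<nu>" "measure \<nu> K = 1"
    "\<And>y. y \<in> K \<Longrightarrow> norm y \<le> B"
proof -
  from assms obtain K where ps: "prob_space \<nu>" and s: "sets \<nu> = sets borel" and K: "compact K" "emeasure \<nu> K = 1"
    unfolding cpt_prob_def by auto
  have sp: "space \<nu> = UNIV" using s sets_eq_imp_space_eq by fastforce
  have Ks: "K \<in> sets \<nu>" using K s by (simp add: borel_compact)
  have "measure \<nu> K = 1" using K(2) by (simp add: measure_def)
  moreover obtain B where "\<And>y. y \<in> K \<Longrightarrow> norm y \<le> B"
    using compact_imp_bounded[OF K(1)] by (auto simp: bounded_iff)
  ultimately show ?thesis using that ps s sp Ks by blast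
qed

lemma floor_event_meas:
  fixes \<nu> :: "(real^'d::finite) measure"
  assumes "sets \<nu> = sets borel"
  shows "{y\<in>space \<nu>. (\<chi> i. \<lfloor>y$i / r$i + x$i\<rfloor>) = k} \<in> sets \<nu>"
proof -
  have "Measurable.pred borel (\<lambda>y::real^'d. \<forall>i\<in>UNIV. \<lfloor>y$i / r$i + x$i\<rfloor> = k$i)" by measurable
  then have "{y::real^'d. \<forall>i\<in>UNIV. \<lfloor>y$i / r$i + x$i\<rfloor> = k$i} \<in> sets borel" by (simp add: pred_def)
  moreover have "space \<nu> = UNIV" using assms sets_eq_imp_space_eq by fastforce
  ultimately show ?thesis using assms by (simp add: vec_eq_iff)
qed

lemma floor_ent_cmp:
  fixes \<nu> :: "(real^'d::finite) measure" and r r' x x' :: "real^'d" and R :: real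
  assumes cp: "cpt_prob \<nu>" and r: "\<And>i. 0 < r$i" and r': "\<And>i. 0 < r'$i"
    and R: "\<And>i. r'$i \<le> R * r$i" and R0: "R \<ge> 0"
  shows "floor_ent \<nu> r x \<le> floor_ent \<nu> r' x' + log 2 ((R+2) ^ CARD('d))"
proof -
  obtain K B where ps: "prob_space \<nu>" and s: "sets \<nu> = sets borel" and sp: "space \<nu> = UNIV"
    and K: "K \<in> sets \<nu>" "measure \<nu> K = 1" and B: "\<And>y. y \<in> K \<Longrightarrow> norm y \<le> B"
    using cpt_facts[OF cp] by metis
  define F where "F y = (\<chi> i. \<lfloor>y$i / r$i + x$i\<rfloor>)" for y :: "real^'d"
  define G where "G y = (\<chi> i. \<lfloor>y$i / r'$i + x'$i\<rfloor>)" for y :: "real^'d"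
  define ZF where "ZF i = \<lceil>B / r$i + \<bar>x$i\<bar>\<rceil> + 1" for i
  define ZG where "ZG i = \<lceil>B / r'$i + \<bar>x'$i\<bar>\<rceil> + 1" for i
  define TF where "TF = {k::int^'d. \<forall>i. k$i \<in> {- ZF i .. ZF i}}"
  define TG where "TG = {k::int^'d. \<forall>i. k$i \<in> {- ZG i .. ZG i}}"
  have bnd: "\<bar>\<lfloor>y$i / s + z\<rfloor>\<bar> \<le> \<lceil>B / s + \<bar>z\<bar>\<rceil> + 1" if "y \<in> K" "s > 0" for y i s z
  proof -
    have "\<bar>y$i\<bar> \<le> B" using B[OF that(1)] component_le_norm_cart[of y i] by linarith
    then have "\<bar>y$i / s\<bar> \<le> B / s" using that(2) by (simp add: abs_div divide_right_mono)
    then have "\<bar>y$i / s + z\<bar> \<le> B / s + \<bar>z\<bar>" by linarith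
    then have h: "\<bar>y$i / s + z\<bar> \<le> real_of_int \<lceil>B / s + \<bar>z\<bar>\<rceil>" using le_of_int_ceiling[of "B / s + \<bar>z\<bar>"] by linarith
    have "real_of_int \<lfloor>y$i / s + z\<rfloor> \<le> y$i / s + z" "y$i / s + z < real_of_int \<lfloor>y$i / s + z\<rfloor> + 1"
      by linarith+
    then have "\<bar>real_of_int \<lfloor>y$i / s + z\<rfloor>\<bar> \<le> real_of_int \<lceil>B / s + \<bar>z\<bar>\<rceil> + 1" using h by linarith
    then show ?thesis by linarith
  qed
  have inF: "F y \<in> TF" if "y \<in> K" for y
  proof -
    have "\<bar>\<lfloor>y$i / r$i + x$i\<rfloor>\<bar> \<le> ZF i" for i using bnd[OF that r[of i], of i "x$i"] by (simp add: ZF_def)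
    then show ?thesis by (auto simp: F_def TF_def abs_le_iff) (smt (verit))
  qed
  have inG: "G y \<in> TG" if "y \<in> K" for y
  proof -
    have "\<bar>\<lfloor>y$i / r'$i + x'$i\<rfloor>\<bar> \<le> ZG i" for i using bnd[OF that r'[of i], of i "x'$i"] by (simp add: ZG_def)
    then show ?thesis by (auto simp: G_def TG_def abs_le_iff) (smt (verit))
  qed
  have finF: "finite TF" unfolding TF_def by (rule box_vec) simp
  have finG: "finite TG" unfolding TG_def by (rule box_vec) simp
  define M :: real where "M = (R+2) ^ CARD('d)"
  have M1: "M \<ge> 1" unfolding M_def using R0 by (simp add: one_le_power)
  have card: "real (card {F y | y. y \<in> K \<and> G y = b}) \<le> M" for b
  proof -
    define l where "l i = \<lfloor>(real_of_int (b$i) - x'$i) * r'$i / r$i + x$i\<rfloor>" for i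
    define c where "c i = \<lceil>r'$i / r$i\<rceil>" for i
    have sub: "{F y | y. y \<in> K \<and> G y = b} \<subseteq> {k::int^'d. \<forall>i. k$i \<in> {l i .. l i + c i}}"
    proof (intro subsetI CollectI allI)
      fix k i assume "k \<in> {F y | y. y \<in> K \<and> G y = b}"
      then obtain y where y: "y \<in> K" "G y = b" and ky: "k = F y" by blast
      define u where "u = (real_of_int (b$i) - x'$i) * r'$i / r$i + x$i"
      define L where "L = r'$i / r$i"
      define v where "v = y$i / r$i + x$i"
      have gb: "\<lfloor>y$i / r'$i + x'$i\<rfloor> = b$i" using y(2) unfolding G_def by (metis vec_lambda_beta)
      have g1: "real_of_int (b$i) \<le> y$i / r'$i + x'$i" using gb by linarith
      have g2: "y$i / r'$i + x'$i < real_of_int (b$i) + 1" using gb by linarith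
      have ri: "r$i > 0" "r'$i > 0" using r r' by auto
      have y1: "(real_of_int (b$i) - x'$i) * r'$i \<le> y$i" using g1 ri by (simp add: field_simps)
      have y2: "y$i < (real_of_int (b$i) + 1 - x'$i) * r'$i" using g2 ri by (simp add: field_simps)
      have v1: "u \<le> v" unfolding u_def v_def using y1 ri by (simp add: divide_right_mono)
      have "y$i / r$i < (real_of_int (b$i) + 1 - x'$i) * r'$i / r$i" using y2 ri by (simp add: divide_strict_right_mono)
      moreover have "(real_of_int (b$i) + 1 - x'$i) * r'$i / r$i = (real_of_int (b$i) - x'$i) * r'$i / r$i + r'$i / r$i"
        using ri by (simp add: field_simps)
      ultimately have v2: "v < u + L" unfolding u_def v_def L_def by linarith
      have f1: "l i \<le> \<lfloor>v\<rfloor>" unfolding l_def u_def[symmetric] using v1 by (simp add: floor_mono)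
      have "real_of_int \<lfloor>v\<rfloor> \<le> v" by simp
      moreover have "u < real_of_int \<lfloor>u\<rfloor> + 1" by linarith
      moreover have "L \<le> real_of_int (c i)" unfolding c_def L_def by simp
      ultimately have "real_of_int \<lfloor>v\<rfloor> < real_of_int (l i) + 1 + real_of_int (c i)"
        using v2 unfolding l_def u_def[symmetric] by linarith
      then have f2: "\<lfloor>v\<rfloor> \<le> l i + c i" by linarith
      show "k $ i \<in> {l i .. l i + c i}" using f1 f2 by (simp add: ky F_def v_def)
    qed
    have fb: "finite {k::int^'d. \<forall>i. k$i \<in> {l i .. l i + c i}}" by (rule box_vec) simp
    have "card {F y | y. y \<in> K \<and> G y = b} \<le> card {k::int^'d. \<forall>i. k$i \<in> {l i .. l i + c i}}"
      by (rule card_mono[OF fb sub])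
    also have "\<dots> = (\<Prod>i\<in>UNIV. card {l i .. l i + c i})" by (rule box_vec) simp
    finally have "real (card {F y | y. y \<in> K \<and> G y = b}) \<le> real (\<Prod>i\<in>UNIV. card {l i .. l i + c i})"
      by (simp only: of_nat_le_iff)
    also have "\<dots> = (\<Prod>i\<in>UNIV. real (card {l i .. l i + c i}))" by (rule of_nat_prod)
    also have "\<dots> \<le> (\<Prod>i\<in>(UNIV::'d set). R + 2)"
    proof (rule prod_mono)
      fix i :: 'd
      have c0: "c i \<ge> 1" unfolding c_def using r r' by (simp add: zero_less_divide_iff)
      have "real (card {l i .. l i + c i}) = real_of_int (c i) + 1" using c0 by simp
      also have "\<dots> \<le> r'$i / r$i + 2" unfolding c_def by linarith
      also have "\<dots> \<le> R + 2" using R[of i] r[of i] by (simp add: divide_le_eq)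
      finally show "0 \<le> real (card {l i .. l i + c i}) \<and> real (card {l i .. l i + c i}) \<le> R + 2" by simp
    qed
    finally show ?thesis by (simp add: M_def)
  qed
  have mF: "\<And>k. {y\<in>space \<nu>. F y = k} \<in> sets \<nu>" unfolding F_def by (rule floor_event_meas[OF s])
  have mG: "\<And>k. {y\<in>space \<nu>. G y = k} \<in> sets \<nu>" unfolding G_def by (rule floor_event_meas[OF s])
  have "infsum (\<lambda>k. phi (measure \<nu> {y\<in>space \<nu>. F y = k})) UNIV
       \<le> infsum (\<lambda>k. phi (measure \<nu> {y\<in>space \<nu>. G y = k})) UNIV + log 2 M"
    by (rule ent_compare[OF ps K mF mG finF finG inF inG card M1])
  then show ?thesis unfolding floor_ent_phi F_def G_def M_def .
qed

lemma meas_pair: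
  fixes \<nu> :: "(real^'d::finite) measure" and r :: "real^'d" and k :: "int^'d"
  assumes "prob_space \<nu>" "sets \<nu> = sets borel"
  shows "(\<lambda>x. measure \<nu> {y \<in> space \<nu>. (\<chi> i. \<lfloor>y$i / r$i + x$i\<rfloor>) = k}) \<in> borel_measurable borel"
proof -
  interpret prob_space \<nu> by fact
  have sp: "space \<nu> = UNIV" using assms(2) sets_eq_imp_space_eq by fastforce
  let ?Q = "{p :: (real^'d) \<times> (real^'d). \<forall>i. \<lfloor>snd p $ i / r$i + fst p $i\<rfloor> = k$i}"
  have Q: "?Q \<in> sets (borel \<Otimes>\<^sub>M \<nu>)"
  proof -
    have e: "sets (borel \<Otimes>\<^sub>M \<nu>) = sets (borel \<Otimes>\<^sub>M (borel :: (real^'d) measure))"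
      by (rule sets_pair_measure_cong) (auto simp: assms(2))
    have "Measurable.pred (borel \<Otimes>\<^sub>M borel) (\<lambda>p::(real^'d)\<times>(real^'d). \<forall>i\<in>UNIV. \<lfloor>snd p $ i / r$i + fst p $ i\<rfloor> = k$i)"
      by measurable
    then have "?Q \<in> sets (borel \<Otimes>\<^sub>M (borel :: (real^'d) measure))"
      by (simp add: pred_def space_pair_measure)
    then show ?thesis by (simp only: e)
  qed
  have "(\<lambda>x. emeasure \<nu> (Pair x -` ?Q)) \<in> borel_measurable borel"
    by (rule measurable_emeasure_Pair[OF Q])
  then have "(\<lambda>x. enn2real (emeasure \<nu> (Pair x -` ?Q))) \<in> borel_measurable borel"
    by measurable
  moreover have "\<And>x. Pair x -` ?Q = {y \<in> space \<nu>. (\<chi> i. \<lfloor>y$i / r$i + x$i\<rfloor>) = k}"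
    by (auto simp: sp vec_eq_iff)
  ultimately show ?thesis by (simp add: measure_def)
qed

lemma phi_meas[measurable]: "phi \<in> borel_measurable borel"
  unfolding phi_def by measurable

lemma infsum_support:
  fixes \<nu> :: "'a measure" and F :: "'a \<Rightarrow> 'k"
  assumes ps: "prob_space \<nu>" and K: "K \<in> sets \<nu>" "measure \<nu> K = 1"
    and mF: "\<And>k. {y\<in>space \<nu>. F y = k} \<in> sets \<nu>"
    and fin: "finite TF" and inF: "\<And>y. y \<in> K \<Longrightarrow> F y \<in> TF"
  shows "infsum (\<lambda>k. phi (measure \<nu> {y\<in>space \<nu>. F y = k})) UNIV
      = (\<Sum>a\<in>TF. phi (measure \<nu> {y\<in>space \<nu>. F y = a}))"
proof -
  interpret prob_space \<nu> by fact
  have "measure \<nu> (space \<nu> - K) = 0" using prob_compl[OF K(1)] K(2) by simp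
  then have null: "space \<nu> - K \<in> null_sets \<nu>"
    using K(1) by (simp add: emeasure_eq_measure null_sets_def)
  have restr: "measure \<nu> A = measure \<nu> (A \<inter> K)" if A: "A \<in> sets \<nu>" for A
  proof -
    have "A - (space \<nu> - K) = A \<inter> K" using sets.sets_into_space[OF A] by auto
    then show ?thesis using measure_Diff_null_set[OF A null] by simp
  qed
  have zF: "measure \<nu> {y\<in>space \<nu>. F y = a} = 0" if "a \<notin> TF" for a
  proof -
    have "{y\<in>space \<nu>. F y = a} \<inter> K = {}" using inF that by auto
    then show ?thesis using restr[OF mF] by simp
  qed
  have "infsum (\<lambda>k. phi (measure \<nu> {y\<in>space \<nu>. F y = k})) UNIV
      = infsum (\<lambda>k. phi (measure \<nu> {y\<in>space \<nu>. F y = k})) TF"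
    by (rule infsum_cong_neutral) (auto simp: zF phi_def)
  then show ?thesis using fin by simp
qed

lemma floor_bnd:
  fixes y :: "real^'d::finite"
  assumes "norm y \<le> B" "s > 0"
  shows "\<bar>\<lfloor>y$i / s + z\<rfloor>\<bar> \<le> \<lceil>B / s + \<bar>z\<bar>\<rceil> + 1"
proof -
  have "\<bar>y$i\<bar> \<le> B" using assms(1) component_le_norm_cart[of y i] by linarith
  then have "\<bar>y$i / s\<bar> \<le> B / s" using assms(2) by (simp add: abs_div divide_right_mono)
  then have "\<bar>y$i / s + z\<bar> \<le> B / s + \<bar>z\<bar>" by linarith
  then have h: "\<bar>y$i / s + z\<bar> \<le> real_of_int \<lceil>B / s + \<bar>z\<bar>\<rceil>" using le_of_int_ceiling[of "B / s + \<bar>z\<bar>"] by linarith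
  have "real_of_int \<lfloor>y$i / s + z\<rfloor> \<le> y$i / s + z" "y$i / s + z < real_of_int \<lfloor>y$i / s + z\<rfloor> + 1"
    by linarith+
  then have "\<bar>real_of_int \<lfloor>y$i / s + z\<rfloor>\<bar> \<le> real_of_int \<lceil>B / s + \<bar>z\<bar>\<rceil> + 1" using h by linarith
  then show ?thesis by linarith
qed

definition cube :: "(real^'d::finite) set" where
  "cube = {x. \<forall>i. 0 \<le> x$i \<and> x$i < 1}"

lemma cube_sets[measurable]: "cube \<in> sets (lborel :: (real^'d::finite) measure)"
proof -
  have "Measurable.pred borel (\<lambda>x::real^'d. \<forall>i\<in>UNIV. 0 \<le> x$i \<and> x$i < 1)" by measurable
  then show ?thesis by (simp add: pred_def cube_def)
qed

lemma cube_fin: "emeasure lborel (cube :: (real^'d::finite) set) < \<infinity>"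
proof (rule emeasure_bounded_finite)
  show "bounded (cube :: (real^'d::finite) set)"
    unfolding bounded_iff
  proof (intro exI ballI)
    fix x :: "real^'d" assume "x \<in> cube"
    then have "0 \<le> x$i \<and> x$i < 1" for i by (simp add: cube_def)
    then have "\<bar>x$i\<bar> \<le> 1" for i by (meson abs_le_iff less_eq_real_def order.trans zero_le_one neg_le_0_iff_le)
    then have "sum (\<lambda>i. \<bar>x$i\<bar>) UNIV \<le> sum (\<lambda>i. 1) (UNIV::'d set)" by (intro sum_mono) auto
    then show "norm x \<le> real CARD('d)" using norm_le_l1_cart[of x] by simp
  qed
qed

lemma cube_sets_borel: "cube \<in> sets (borel :: (real^'d::finite) measure)"
  using cube_sets by simp

lemma cube_fin': "emeasure lborel (cube :: (real^'d::finite) set) < \<top>"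
  using cube_fin by (simp add: infinity_ennreal_def)

lemma avg_ent_cube: "avg_ent \<nu> r = (LINT x : cube | lborel. floor_ent \<nu> r x)"
  unfolding avg_ent_def cube_def by simp

lemma fe_meas:
  fixes \<nu> :: "(real^'d::finite) measure"
  assumes cp: "cpt_prob \<nu>" and r: "\<And>i. 0 < r$i"
  shows "(\<lambda>x. indicator cube x * floor_ent \<nu> r x) \<in> borel_measurable lborel"
proof -
  obtain K B where ps: "prob_space \<nu>" and s: "sets \<nu> = sets borel" and sp: "space \<nu> = UNIV"
    and K: "K \<in> sets \<nu>" "measure \<nu> K = 1" and B: "\<And>y. y \<in> K \<Longrightarrow> norm y \<le> B"
    using cpt_facts[OF cp] by metis
  define Z where "Z i = \<lceil>B / r$i + 1\<rceil> + 1" for i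
  define T where "T = {k::int^'d. \<forall>i. k$i \<in> {- Z i .. Z i}}"
  have finT: "finite T" unfolding T_def by (rule box_vec) simp
  have eq: "indicator cube x * floor_ent \<nu> r x
     = indicator cube x * (\<Sum>k\<in>T. phi (measure \<nu> {y\<in>space \<nu>. (\<chi> i. \<lfloor>y$i / r$i + x$i\<rfloor>) = k}))" for x
  proof (cases "x \<in> cube")
    case False then show ?thesis by simp
  next
    case True
    then have "0 \<le> x$i \<and> x$i < 1" for i by (simp add: cube_def)
    then have xb: "\<bar>x$i\<bar> \<le> 1" for i by (meson abs_le_iff less_eq_real_def order.trans zero_le_one neg_le_0_iff_le)
    have inT: "(\<chi> i. \<lfloor>y$i / r$i + x$i\<rfloor>) \<in> T" if "y \<in> K" for y
    proof -
      have "\<bar>\<lfloor>y$i / r$i + x$i\<rfloor>\<bar> \<le> Z i" for i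
      proof -
        have "\<bar>\<lfloor>y$i / r$i + x$i\<rfloor>\<bar> \<le> \<lceil>B / r$i + \<bar>x$i\<bar>\<rceil> + 1" by (rule floor_bnd[OF B[OF that] r])
        moreover have "\<lceil>B / r$i + \<bar>x$i\<bar>\<rceil> \<le> \<lceil>B / r$i + 1\<rceil>" using xb[of i] by (intro ceiling_mono) simp
        ultimately show ?thesis unfolding Z_def by linarith
      qed
      then show ?thesis by (auto simp: T_def abs_le_iff) (smt (verit))
    qed
    show ?thesis unfolding floor_ent_phi
      by (subst infsum_support[OF ps K floor_event_meas[OF s] finT inT]) auto
  qed
  have "(\<lambda>x. indicator cube x * (\<Sum>k\<in>T. phi (measure \<nu> {y\<in>space \<nu>. (\<chi> i. \<lfloor>y$i / r$i + x$i\<rfloor>) = k})))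
        \<in> borel_measurable lborel"
    using meas_pair[OF ps s] by measurable
  then show ?thesis by (subst eq)
qed

lemma fe_nonneg:
  assumes "cpt_prob \<nu>" shows "0 \<le> floor_ent \<nu> r x"
proof -
  interpret prob_space \<nu> using assms by (simp add: cpt_prob_def)
  show ?thesis unfolding floor_ent_phi by (intro infsum_nonneg phi_nonneg) auto
qed

lemma const_integrable: "set_integrable lborel (cube :: (real^'d::finite) set) (\<lambda>_. a::real)"
  unfolding set_integrable_def
  by (rule integrableI_bounded_set_indicator[where B="\<bar>a\<bar>"]) (auto simp: cube_fin cube_fin' cube_sets_borel)

lemma fe_integrable:
  fixes \<nu> :: "(real^'d::finite) measure"
  assumes cp: "cpt_prob \<nu>" and r: "\<And>i. 0 < r$i"
  shows "set_integrable lborel cube (floor_ent \<nu> r)"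
  unfolding set_integrable_def
proof (rule integrableI_bounded_set[where A=cube and B="floor_ent \<nu> r 0 + log 2 ((1+2) ^ CARD('d))"])
  show "(\<lambda>x. indicat_real cube x *\<^sub>R floor_ent \<nu> r x) \<in> borel_measurable lborel"
    using fe_meas[OF cp r] by simp
  show "AE x in lborel. x \<in> cube \<longrightarrow> norm (indicat_real cube x *\<^sub>R floor_ent \<nu> r x) \<le> floor_ent \<nu> r 0 + log 2 ((1+2) ^ CARD('d))"
  proof (intro AE_I2 impI)
    fix x :: "real^'d" assume "x \<in> cube"
    have "floor_ent \<nu> r x \<le> floor_ent \<nu> r 0 + log 2 ((1+2) ^ CARD('d))"
      by (rule floor_ent_cmp[OF cp r r]) auto
    then show "norm (indicat_real cube x *\<^sub>R floor_ent \<nu> r x) \<le> floor_ent \<nu> r 0 + log 2 ((1+2) ^ CARD('d))"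
      using fe_nonneg[OF cp] \<open>x \<in> cube\<close> by simp
  qed
qed (auto simp: cube_fin cube_fin' cube_sets_borel)

lemma avg_ent_cmp:
  fixes \<nu> :: "(real^'d::finite) measure" and r r' :: "real^'d" and R :: real
  assumes cp: "cpt_prob \<nu>" and r: "\<And>i. 0 < r$i" and r': "\<And>i. 0 < r'$i"
    and R: "\<And>i. r'$i \<le> R * r$i" and R0: "R \<ge> 0"
  shows "avg_ent \<nu> r \<le> avg_ent \<nu> r' + measure lborel (cube :: (real^'d) set) * log 2 ((R+2) ^ CARD('d))"
proof -
  define c where "c = log 2 ((R+2) ^ CARD('d))"
  define m where "m = measure lborel (cube :: (real^'d) set)"
  define A where "A = (LINT x : cube | lborel. floor_ent \<nu> r x)"
  define Bg where "Bg = (LINT x : cube | lborel. floor_ent \<nu> r' x)"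
  have c0: "c \<ge> 0" unfolding c_def using R0 by (simp add: one_le_power)
  have m0: "m \<ge> 0" unfolding m_def by simp
  have fr: "set_integrable lborel cube (floor_ent \<nu> r)" by (rule fe_integrable[OF cp r])
  have fr': "set_integrable lborel cube (floor_ent \<nu> r')" by (rule fe_integrable[OF cp r'])
  have cmp: "floor_ent \<nu> r x \<le> floor_ent \<nu> r' x' + c" for x x'
    unfolding c_def by (rule floor_ent_cmp[OF cp r r' R R0])
  have sc: "(LINT x : (cube :: (real^'d) set) | lborel. (a::real)) = m * a" for a
  proof -
    have "(LINT x : (cube :: (real^'d) set) | lborel. a) = integral\<^sup>L lborel (\<lambda>x. indicator (cube :: (real^'d) set) x * a)"
      unfolding set_lebesgue_integral_def by simp
    also have "\<dots> = integral\<^sup>L lborel (indicator (cube :: (real^'d) set)) * a"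
      by (rule integral_mult_left_zero)
    finally show ?thesis by (simp add: m_def)
  qed
  have step: "A - m * c \<le> m * floor_ent \<nu> r' x'" for x'
  proof -
    have "A \<le> (LINT x : (cube :: (real^'d) set) | lborel. floor_ent \<nu> r' x' + c)"
      unfolding A_def by (rule set_integral_mono[OF fr const_integrable]) (rule cmp)
    then show ?thesis using sc by (simp add: algebra_simps)
  qed
  have "(LINT x : (cube :: (real^'d) set) | lborel. A - m * c) \<le> (LINT x : cube | lborel. m * floor_ent \<nu> r' x)"
  proof (rule set_integral_mono[OF const_integrable])
    show "set_integrable lborel cube (\<lambda>x. m * floor_ent \<nu> r' x)"
      using fr' by (simp add: set_integrable_mult_right)
  qed (rule step)
  then have "m * (A - m * c) \<le> m * Bg" using sc by (simp add: Bg_def)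
  moreover have "Bg \<ge> 0" unfolding Bg_def set_lebesgue_integral_def
    using fe_nonneg[OF cp] by (intro integral_nonneg_AE) (auto simp: indicator_def)
  moreover have "m \<le> 1 \<or> True" by simp
  ultimately have "A \<le> Bg + m * c"
  proof (cases "m = 0")
    case True
    then have "A \<le> 0" using step[of 0] by simp
    then show ?thesis using \<open>Bg \<ge> 0\<close> True by simp
  next
    case False
    then have "m > 0" using m0 by simp
    then have "A - m * c \<le> Bg" using \<open>m * (A - m * c) \<le> m * Bg\<close> by simp
    then show ?thesis by simp
  qed
  then show ?thesis unfolding avg_ent_cube A_def Bg_def m_def c_def by simp
qed



lemma seq_bounds:
  fixes lam :: "real^'d::{finite,linorder}"
  assumes adm: "admissible_lambda lam"
  shows "lam$j ^ n \<le> seq_s lam n $ j \<and> seq_s lam n $ j \<le> 2 * lam$j ^ n"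
proof (induction n)
  case 0 then show ?case by simp
next
  case (Suc n)
  have l: "0 < lam$j" "lam$j < 1" using adm by (auto simp: admissible_lambda_def)
  define s where "s = seq_s lam n $ j"
  define L where "L = lam$j ^ Suc n"
  have Lp: "L > 0" unfolding L_def using l by simp
  have "L < lam$j ^ n" unfolding L_def using l by (simp add: power_strict_decreasing)
  then have sL: "s > L" using Suc.IH unfolding s_def by linarith
  define q where "q = s / L"
  have q1: "q > 1" unfolding q_def using sL Lp by simp
  define b0 where "b0 = nat \<lfloor>q\<rfloor>"
  have b0r: "real b0 = of_int \<lfloor>q\<rfloor>" unfolding b0_def using q1 by simp
  have b0pos: "b0 > 0" unfolding b0_def using q1 by linarith
  have P_iff: "(0 < b \<and> s / real b \<ge> L \<and> L > s / (1 + real b)) \<longleftrightarrow> b = b0" for b :: nat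
  proof
    assume h: "0 < b \<and> s / real b \<ge> L \<and> L > s / (1 + real b)"
    then have bp: "real b > 0" by simp
    have "L * real b \<le> s" using h bp by (simp add: le_divide_eq)
    then have "real b \<le> q" unfolding q_def using Lp by (simp add: le_divide_eq mult.commute)
    moreover have "s < L * (1 + real b)" using h bp by (simp add: divide_less_eq add_pos_pos)
    then have "q < 1 + real b" unfolding q_def using Lp by (simp add: divide_less_eq mult.commute)
    ultimately have "of_int \<lfloor>q\<rfloor> = real b" by (metis floor_eq2 of_int_of_nat_eq add.commute floor_of_nat of_int_floor_le le_floor_iff)
    then show "b = b0" using b0r by simp
  next
    assume "b = b0"
    then have bq: "real b = of_int \<lfloor>q\<rfloor>" using b0r by simp
    have bp: "real b > 0" using b0pos \<open>b = b0\<close> by simp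
    have "real b \<le> q" using bq by simp
    then have "L * real b \<le> s" unfolding q_def using Lp by (simp add: le_divide_eq mult.commute)
    moreover have "q < 1 + real b" using bq by linarith
    then have "s < L * (1 + real b)" unfolding q_def using Lp by (simp add: divide_less_eq mult.commute)
    ultimately show "0 < b \<and> s / real b \<ge> L \<and> L > s / (1 + real b)"
      using bp by (simp add: le_divide_eq divide_less_eq add_pos_pos mult.commute)
  qed
  have the: "(THE b::nat. 0 < b \<and> s / real b \<ge> L \<and> L > s / (1 + real b)) = b0"
    using P_iff by auto
  have eq: "seq_s lam (Suc n) $ j = s / real b0"
    using the by (simp add: s_def L_def)
  have h: "0 < b0 \<and> s / real b0 \<ge> L \<and> L > s / (1 + real b0)" using P_iff by simp
  have "s < L * (1 + real b0)" using h by (simp add: divide_less_eq add_pos_pos)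
  also have "\<dots> \<le> L * (2 * real b0)" using b0pos Lp by (intro mult_left_mono) auto
  finally have "s / real b0 < 2 * L" using b0pos by (simp add: divide_less_eq mult.commute mult.left_commute)
  then show ?case using h eq unfolding L_def by simp
qed

lemma comb:
  fixes a :: "int \<Rightarrow> real" and \<beta> B :: real and q :: int
  assumes \<beta>: "\<beta> > 0" and B: "a q \<le> B" "0 \<le> B"
  defines "e \<equiv> \<lambda>n. if \<beta> / 6 \<le> a n then a n else 0"
  shows "(\<Sum>n\<in>{q - int k..<q}. a n) + 2 * e (q - int k)
     \<le> 3 * (\<Sum>n\<in>{n\<in>{q - int k..<q}. max ((2/3) * a (n+1)) (\<beta>/6) \<le> a n}. a n) + \<beta> / 6 * real k + 2 * B"
proof (induction k)
  case 0
  then show ?case using B by (simp add: e_def)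
next
  case (Suc k)
  define p where "p = q - int (Suc k)"
  have pp: "q - int k = p + 1" unfolding p_def by simp
  have e0: "e n \<ge> 0" for n using \<beta> by (simp add: e_def)
  have I1: "{p..<q} = insert p {p+1..<q}" unfolding p_def by auto
  have fin: "finite {n\<in>{p+1..<q}. max ((2/3) * a (n+1)) (\<beta>/6) \<le> a n}"
    by (rule finite_subset[of _ "{p+1..<q}"]) auto
  define S where "S = (\<Sum>n\<in>{p+1..<q}. a n)"
  define Gs where "Gs = (\<Sum>n\<in>{n\<in>{p+1..<q}. max ((2/3) * a (n+1)) (\<beta>/6) \<le> a n}. a n)"
  have IH: "S + 2 * e (p+1) \<le> 3 * Gs + \<beta> / 6 * real k + 2 * B"
    using Suc.IH unfolding pp S_def Gs_def .
  have Sp: "(\<Sum>n\<in>{p..<q}. a n) = a p + S" unfolding I1 S_def by simp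
  have kk: "\<beta> / 6 * real (Suc k) = \<beta> / 6 * real k + \<beta> / 6" by (simp add: ring_distribs)
  show ?case
  proof (cases "max ((2/3) * a (p+1)) (\<beta>/6) \<le> a p")
    case True
    have "{n\<in>{p..<q}. max ((2/3) * a (n+1)) (\<beta>/6) \<le> a n} = insert p {n\<in>{p+1..<q}. max ((2/3) * a (n+1)) (\<beta>/6) \<le> a n}"
      using True unfolding I1 by auto
    moreover have "sum a (insert p {n\<in>{p+1..<q}. max ((2/3) * a (n+1)) (\<beta>/6) \<le> a n}) = a p + Gs"
      unfolding Gs_def by (rule sum.insert[OF fin]) auto
    ultimately have Gp: "(\<Sum>n\<in>{n\<in>{p..<q}. max ((2/3) * a (n+1)) (\<beta>/6) \<le> a n}. a n) = a p + Gs"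
      by simp
    have ep: "e p = a p" using True by (simp add: e_def)
    have d3: "3 * (a p + Gs) = 3 * a p + 3 * Gs" by simp
    show ?thesis unfolding p_def[symmetric] Sp Gp using IH ep e0[of "p+1"] \<beta> kk d3 by linarith
  next
    case False
    have "{n\<in>{p..<q}. max ((2/3) * a (n+1)) (\<beta>/6) \<le> a n} = {n\<in>{p+1..<q}. max ((2/3) * a (n+1)) (\<beta>/6) \<le> a n}"
      using False unfolding I1 by auto
    then have Gp: "(\<Sum>n\<in>{n\<in>{p..<q}. max ((2/3) * a (n+1)) (\<beta>/6) \<le> a n}. a n) = Gs"
      unfolding Gs_def by simp
    show ?thesis
    proof (cases "\<beta> / 6 \<le> a p")
      case True
      then have lt: "a p < (2/3) * a (p+1)" using False by simp
      then have "a (p+1) > \<beta> / 6" using True \<beta> by simp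
      then have "e (p+1) = a (p+1)" by (simp add: e_def)
      moreover have "e p = a p" using True by (simp add: e_def)
      ultimately show ?thesis unfolding p_def[symmetric] Sp Gp using IH lt \<beta> kk by linarith
    next
      case f2: False
      then have "e p = 0" by (simp add: e_def)
      then show ?thesis unfolding p_def[symmetric] Sp Gp using IH f2 e0[of "p+1"] kk by linarith
    qed
  qed
qed

lemma telescope:
  fixes h :: "int \<Rightarrow> real"
  shows "(\<Sum>n\<in>{q - int k..<q}. h n - h (n - 1)) = h (q - 1) - h (q - int k - 1)"
proof (induction k)
  case 0 then show ?case by simp
next
  case (Suc k)
  have I1: "{q - int (Suc k)..<q} = insert (q - int (Suc k)) {q - int k..<q}" by auto
  have e: "q - int (Suc k) = q - int k - 1" by simp
  have "(\<Sum>n\<in>{q - int (Suc k)..<q}. h n - h (n - 1)) = (h (q - int (Suc k)) - h (q - int (Suc k) - 1)) + (\<Sum>n\<in>{q - int k..<q}. h n - h (n - 1))"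
    unfolding I1 by simp
  also have "\<dots> = h (q - 1) - h (q - int (Suc k) - 1)" using Suc.IH unfolding e by simp
  finally show ?case .
qed


lemma pw_bound:
  fixes x L e E :: real
  assumes "0 < L" "L \<le> x" "x < 1" "e \<le> E" "0 \<le> E"
  shows "x powr (- e) \<le> L powr (- E)"
proof (cases "e \<le> 0")
  case True
  have "x powr (-e) \<le> x powr 0" using assms True by (intro powr_mono') auto
  also have "\<dots> = 1" using assms by simp
  also have "1 = L powr 0" using assms by simp
  also have "L powr 0 \<le> L powr (-E)" using assms by (intro powr_mono') auto
  finally show ?thesis .
next
  case False
  have "x powr (-e) \<le> L powr (-e)" using assms False by (intro powr_mono2') auto
  also have "\<dots> \<le> L powr (-E)" using assms by (intro powr_mono') auto
  finally show ?thesis .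
qed

lemma ratio:
  fixes x L u v E rr rr' :: real
  assumes "0 < L" "L \<le> x" "x < 1" "v - u \<le> E" "0 \<le> E"
    and "rr' \<le> 2 * x powr u" "x powr v \<le> rr"
  shows "rr' \<le> (2 * L powr (-E)) * rr"
proof -
  have x0: "x > 0" using assms by linarith
  have "x powr u = x powr v * x powr (- (v - u))" using x0 by (simp add: powr_add[symmetric])
  also have "\<dots> \<le> x powr v * L powr (-E)"
    using pw_bound[OF assms(1-3,4,5)] by (intro mult_left_mono) auto
  also have "\<dots> \<le> rr * L powr (-E)" using assms(7) by (intro mult_right_mono) auto
  finally show ?thesis using assms(6) by (simp add: algebra_simps)
qed



lemma seq_pos:
  fixes lam :: "real^'d::{finite,linorder}"
  assumes adm: "admissible_lambda lam"
  shows "0 < seq_s lam n $ i"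
proof -
  have "0 < lam$i" using adm by (auto simp: admissible_lambda_def)
  then show ?thesis using seq_bounds[OF adm, of i n] by (meson less_le_trans zero_less_power)
qed

lemma seq_powr:
  fixes lam :: "real^'d::{finite,linorder}"
  assumes adm: "admissible_lambda lam"
  shows "lam$i powr real n \<le> seq_s lam n $ i \<and> seq_s lam n $ i \<le> 2 * lam$i powr real n"
proof -
  have "0 < lam$i" using adm by (auto simp: admissible_lambda_def)
  then show ?thesis using seq_bounds[OF adm, of i n] by (simp add: powr_realpow)
qed

theorem lemma3p8:
  fixes lam :: "real^'d::{finite,linorder}"
  assumes "admissible_lambda lam"
  shows "\<forall>N::nat. N \<ge> 1 \<longrightarrow> (\<exists>C::real. C > 1 \<and>
    (\<forall>\<nu> (\<beta>::real) (t1::real) (t2::real).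
      cpt_prob \<nu> \<and> 0 < \<beta> \<and> \<beta> < 1/2 \<and> 0 < t1 \<and> t1 < t2 \<and>
      t2 - t1 > 3 * real N - 1 / log 2 (lam1 lam) \<and>
      cond_ent \<nu> (vpowr lam t2) (vpowr lam t1) / (t2 - t1) > \<beta> \<longrightarrow>
      (let \<tau>1 = \<lceil>t1 / real N + 1 - 1 / (real N * log 2 (lam1 lam))\<rceil>;
           \<tau>2 = \<lfloor>t2 / real N\<rfloor>;
           NN = {n::int. \<tau>1 \<le> n \<and> n < \<tau>2 \<and>
                 cond_ent \<nu> (seq_s lam (nat (int N * n))) (seq_s lam (nat (int N * n - int N)))
                   \<ge> max ((2/3) * cond_ent \<nu> (seq_s lam (nat (int N * n + int N))) (seq_s lam (nat (int N * n))))
                          (\<beta> / 6)}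
       in (\<Sum>n\<in>NN. cond_ent \<nu> (seq_s lam (nat (int N * n))) (seq_s lam (nat (int N * n - int N))))
            \<ge> \<beta> / 6 * (t2 - t1) - C)))"
proof (intro allI impI)
  note adm = assms
  fix N :: nat assume N1: "N \<ge> 1"
  have lpos: "0 < lam$i" "lam$i < 1" for i using adm by (auto simp: admissible_lambda_def)
  define L where "L = Min (range (\<lambda>i. lam$i))"
  have Lin: "L \<in> range (\<lambda>i. lam$i)" unfolding L_def by (intro Min_in) auto
  have Lle: "L \<le> lam$i" for i unfolding L_def by (intro Min_le) auto
  have L0: "0 < L" "L < 1" using Lin lpos by auto
  define l1 where "l1 = lam1 lam"
  have l1: "0 < l1" "l1 < 1" unfolding l1_def lam1_def using lpos by auto
  have lg: "log 2 l1 < 0" using l1 by simp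
  define c0 where "c0 = - 1 / log 2 l1"
  have c0: "c0 > 0" unfolding c0_def using lg by simp
  define E where "E = 2 * real N + c0 + 1"
  have E0: "E \<ge> 0" unfolding E_def using c0 by simp
  define R where "R = 2 * L powr (-E)"
  have R0: "R \<ge> 0" unfolding R_def by simp
  define D where "D = measure lborel (cube :: (real^'d::{finite,linorder}) set) * log 2 ((R+2) ^ CARD('d))"
  have D0: "D \<ge> 0" unfolding D_def using R0 by (intro mult_nonneg_nonneg) (auto simp: one_le_power)
  define C where "C = 4 * D / 3 + 2"
  show "\<exists>C::real. C > 1 \<and>
    (\<forall>\<nu> (\<beta>::real) (t1::real) (t2::real).
      cpt_prob \<nu> \<and> 0 < \<beta> \<and> \<beta> < 1/2 \<and> 0 < t1 \<and> t1 < t2 \<and>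
      t2 - t1 > 3 * real N - 1 / log 2 (lam1 lam) \<and>
      cond_ent \<nu> (vpowr lam t2) (vpowr lam t1) / (t2 - t1) > \<beta> \<longrightarrow>
      (let \<tau>1 = \<lceil>t1 / real N + 1 - 1 / (real N * log 2 (lam1 lam))\<rceil>;
           \<tau>2 = \<lfloor>t2 / real N\<rfloor>;
           NN = {n::int. \<tau>1 \<le> n \<and> n < \<tau>2 \<and>
                 cond_ent \<nu> (seq_s lam (nat (int N * n))) (seq_s lam (nat (int N * n - int N)))
                   \<ge> max ((2/3) * cond_ent \<nu> (seq_s lam (nat (int N * n + int N))) (seq_s lam (nat (int N * n))))
                          (\<beta> / 6)}
       in (\<Sum>n\<in>NN. cond_ent \<nu> (seq_s lam (nat (int N * n))) (seq_s lam (nat (int N * n - int N))))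
            \<ge> \<beta> / 6 * (t2 - t1) - C))"
  proof (intro exI conjI allI impI)
    show "C > 1" unfolding C_def using D0 by simp
    fix \<nu> :: "(real^'d::{finite,linorder}) measure" and \<beta> t1 t2 :: real
    assume H: "cpt_prob \<nu> \<and> 0 < \<beta> \<and> \<beta> < 1/2 \<and> 0 < t1 \<and> t1 < t2 \<and>
      t2 - t1 > 3 * real N - 1 / log 2 (lam1 lam) \<and>
      cond_ent \<nu> (vpowr lam t2) (vpowr lam t1) / (t2 - t1) > \<beta>"
    then have cp: "cpt_prob \<nu>" and \<beta>0: "0 < \<beta>" and t1: "0 < t1" and t12: "t1 < t2"
      and gap: "t2 - t1 > 3 * real N + c0"
      and ce: "cond_ent \<nu> (vpowr lam t2) (vpowr lam t1) / (t2 - t1) > \<beta>"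
      unfolding c0_def l1_def by auto
    define \<tau>1 where "\<tau>1 = \<lceil>t1 / real N + 1 - 1 / (real N * log 2 (lam1 lam))\<rceil>"
    define \<tau>2 where "\<tau>2 = \<lfloor>t2 / real N\<rfloor>"
    define X1 where "X1 = t1 / real N + 1 - 1 / (real N * log 2 (lam1 lam))"
    have Np: "real N > 0" using N1 by simp
    have NX1: "real N * X1 = t1 + real N + c0"
      unfolding X1_def c0_def l1_def using Np lg unfolding l1_def by (simp add: field_simps)
    have t1a: "X1 \<le> of_int \<tau>1" "of_int \<tau>1 < X1 + 1" unfolding \<tau>1_def X1_def by linarith+
    have t2a: "t2 / real N - 1 < of_int \<tau>2" "of_int \<tau>2 \<le> t2 / real N" unfolding \<tau>2_def by linarith+
    have Nt1a: "t1 + real N + c0 \<le> real N * of_int \<tau>1" "real N * of_int \<tau>1 < t1 + 2 * real N + c0"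
    proof -
      show "t1 + real N + c0 \<le> real N * of_int \<tau>1" using t1a(1) Np NX1 by (metis mult_left_mono less_imp_le)
      have "real N * of_int \<tau>1 < real N * (X1 + 1)" using t1a(2) Np by simp
      then show "real N * of_int \<tau>1 < t1 + 2 * real N + c0" using NX1 by (simp add: algebra_simps)
    qed
    have Nt2a: "t2 - real N < real N * of_int \<tau>2" "real N * of_int \<tau>2 \<le> t2"
    proof -
      have "real N * (t2 / real N - 1) < real N * of_int \<tau>2" using t2a(1) Np by simp
      then show "t2 - real N < real N * of_int \<tau>2" using Np by (simp add: algebra_simps)
      show "real N * of_int \<tau>2 \<le> t2" using t2a(2) Np by (simp add: le_divide_eq mult.commute)
    qed
    have \<tau>1pos: "\<tau>1 \<ge> 1"
    proof -
      have "real N * 1 < real N * of_int \<tau>1" using Nt1a(1) t1 c0 by simp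
      then show ?thesis using Np by simp
    qed
    have \<tau>12: "\<tau>1 < \<tau>2"
    proof -
      have "real N * of_int \<tau>1 < real N * of_int \<tau>2" using Nt1a(2) Nt2a(1) gap by linarith
      then show ?thesis using Np by simp
    qed
    have kbound: "of_int (\<tau>2 - \<tau>1) \<le> t2 - t1"
    proof -
      have "real N * of_int (\<tau>2 - \<tau>1) \<le> t2 - t1" using Nt1a(1) Nt2a(2) c0 Np by (simp add: algebra_simps)
      moreover have "of_int (\<tau>2 - \<tau>1) \<le> real N * of_int (\<tau>2 - \<tau>1)" using N1 \<tau>12 by simp
      ultimately show ?thesis by linarith
    qed
    define s where "s n = seq_s lam (nat (int N * n))" for n :: int
    define h where "h n = avg_ent \<nu> (s n)" for n
    define a where "a n = cond_ent \<nu> (seq_s lam (nat (int N * n))) (seq_s lam (nat (int N * n - int N)))" for n :: int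
    have a_h: "a n = h n - h (n - 1)" for n
    proof -
      have "nat (int N * n - int N) = nat (int N * (n - 1))" by (simp add: right_diff_distrib)
      then show ?thesis by (simp add: a_def h_def s_def cond_ent_def)
    qed
    have a_succ: "a (n + 1) = cond_ent \<nu> (seq_s lam (nat (int N * n + int N))) (seq_s lam (nat (int N * n)))" for n
      by (simp add: a_def distrib_left)
    define k where "k = nat (\<tau>2 - \<tau>1)"
    have kk: "\<tau>2 - int k = \<tau>1" unfolding k_def using \<tau>12 by simp
    have sposv: "0 < seq_s lam m $ i" for m i by (rule seq_pos[OF adm])
    have vpos: "0 < vpowr lam t $ i" for t i unfolding vpowr_def using lpos[of i] by simp
    define M where "M = nat (int N * \<tau>2 - int N)"
    have gN: "int N * 1 \<le> int N * \<tau>2" by (rule mult_left_mono) (use \<tau>1pos \<tau>12 in auto)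
    have MN: "nat (int N * \<tau>2) = M + N" unfolding M_def using gN by arith
    have F4: "a \<tau>2 \<le> D"
    proof -
      have "avg_ent \<nu> (seq_s lam (M + N)) \<le> avg_ent \<nu> (seq_s lam M) + D"
        unfolding D_def
      proof (rule avg_ent_cmp[OF cp sposv sposv])
        show "R \<ge> 0" by (rule R0)
        fix i
        show "seq_s lam M $ i \<le> R * seq_s lam (M + N) $ i" unfolding R_def
        proof (rule ratio[OF L0(1) Lle lpos(2), where u="real M" and v="real (M+N)"])
          show "real (M+N) - real M \<le> E" using c0 unfolding E_def by simp
          show "seq_s lam M $ i \<le> 2 * lam$i powr real M" using seq_powr[OF adm, of i M] by blast
          show "lam$i powr real (M+N) \<le> seq_s lam (M+N) $ i" using seq_powr[OF adm, of i "M+N"] by blast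
        qed (rule E0)
      qed
      then show ?thesis unfolding a_def cond_ent_def MN M_def[symmetric] by simp
    qed
    define A where "A = nat (int N * (\<tau>2 - 1))"
    have A_real: "real A = real N * of_int \<tau>2 - real N"
    proof -
      have "int N * (\<tau>2 - 1) \<ge> 0" using \<tau>1pos \<tau>12 by simp
      then have "real A = of_int (int N * (\<tau>2 - 1))" unfolding A_def by (simp only: of_nat_nat)
      then show ?thesis by (simp add: algebra_simps)
    qed
    have F5: "avg_ent \<nu> (vpowr lam t2) \<le> h (\<tau>2 - 1) + D"
    proof -
      have "avg_ent \<nu> (vpowr lam t2) \<le> avg_ent \<nu> (seq_s lam A) + D"
        unfolding D_def
      proof (rule avg_ent_cmp[OF cp vpos sposv])
        show "R \<ge> 0" by (rule R0)
        fix i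
        show "seq_s lam A $ i \<le> R * vpowr lam t2 $ i" unfolding R_def
        proof (rule ratio[OF L0(1) Lle lpos(2), where u="real A" and v="t2"])
          show "t2 - real A \<le> E" using A_real Nt2a(1) c0 unfolding E_def by linarith
        qed (use E0 seq_powr[OF adm] in \<open>auto simp: vpowr_def\<close>)
      qed
      then show ?thesis unfolding h_def s_def A_def .
    qed
    define Bn where "Bn = nat (int N * (\<tau>1 - 1))"
    have B_real: "real Bn = real N * of_int \<tau>1 - real N"
    proof -
      have "int N * (\<tau>1 - 1) \<ge> 0" using \<tau>1pos by simp
      then have "real Bn = of_int (int N * (\<tau>1 - 1))" unfolding Bn_def by (simp only: of_nat_nat)
      then show ?thesis by (simp add: algebra_simps)
    qed
    have F6: "h (\<tau>1 - 1) \<le> avg_ent \<nu> (vpowr lam t1) + D"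
    proof -
      have "avg_ent \<nu> (seq_s lam Bn) \<le> avg_ent \<nu> (vpowr lam t1) + D"
        unfolding D_def
      proof (rule avg_ent_cmp[OF cp sposv vpos])
        show "R \<ge> 0" by (rule R0)
        fix i
        show "vpowr lam t1 $ i \<le> R * seq_s lam Bn $ i" unfolding R_def
        proof (rule ratio[OF L0(1) Lle lpos(2), where u="t1" and v="real Bn"])
          show "real Bn - t1 \<le> E" using B_real Nt1a(2) c0 unfolding E_def by linarith
          show "vpowr lam t1 $ i \<le> 2 * lam $ i powr t1" unfolding vpowr_def using lpos[of i] by simp
        qed (use E0 seq_powr[OF adm] in auto)
      qed
      then show ?thesis unfolding h_def s_def Bn_def .
    qed
    have F3: "(\<Sum>n\<in>{\<tau>1..<\<tau>2}. a n) = h (\<tau>2 - 1) - h (\<tau>1 - 1)"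
      using telescope[of h \<tau>2 k] unfolding kk a_h by simp
    have F7: "cond_ent \<nu> (vpowr lam t2) (vpowr lam t1) > \<beta> * (t2 - t1)"
      using ce t12 by (simp add: less_divide_eq mult.commute)
    define G where "G = {n\<in>{\<tau>1..<\<tau>2}. max ((2/3) * a (n+1)) (\<beta>/6) \<le> a n}"
    define e where "e = (\<lambda>n. if \<beta> / 6 \<le> a n then a n else 0)"
    have cb: "(\<Sum>n\<in>{\<tau>1..<\<tau>2}. a n) + 2 * e \<tau>1 \<le> 3 * (\<Sum>n\<in>G. a n) + \<beta> / 6 * real k + 2 * D"
      using comb[where a=a and \<beta>=\<beta> and B=D and q=\<tau>2 and k=k, OF \<beta>0 F4 D0] unfolding kk G_def e_def .
    have e0: "e \<tau>1 \<ge> 0" unfolding e_def using \<beta>0 by simp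
    have rk: "real k = of_int (\<tau>2 - \<tau>1)" unfolding k_def using \<tau>12 by simp
    have kb: "\<beta> / 6 * real k \<le> \<beta> / 6 * (t2 - t1)"
      unfolding rk using kbound \<beta>0 by (intro mult_left_mono) auto
    have main: "(\<Sum>n\<in>G. a n) \<ge> \<beta> / 6 * (t2 - t1) - C"
    proof -
      define W where "W = \<beta> * (t2 - t1)"
      have W0: "W > 0" unfolding W_def using \<beta>0 t12 by simp
      have kb': "\<beta> / 6 * real k \<le> W / 6" using kb unfolding W_def by simp
      have F7': "cond_ent \<nu> (vpowr lam t2) (vpowr lam t1) > W" using F7 unfolding W_def .
      have "\<beta> / 6 * (t2 - t1) = W / 6" unfolding W_def by simp
      moreover have "3 * (\<Sum>n\<in>G. a n) \<ge> W - 2 * D - W / 6 - 2 * D"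
        using cb e0 kb' F3 F5 F6 F7' unfolding cond_ent_def by linarith
      ultimately show ?thesis unfolding C_def using W0 by linarith
    qed
    have setEq: "{n::int. \<tau>1 \<le> n \<and> n < \<tau>2 \<and>
                 cond_ent \<nu> (seq_s lam (nat (int N * n))) (seq_s lam (nat (int N * n - int N)))
                   \<ge> max ((2/3) * cond_ent \<nu> (seq_s lam (nat (int N * n + int N))) (seq_s lam (nat (int N * n))))
                          (\<beta> / 6)} = G"
      unfolding G_def a_succ[symmetric] a_def by auto
    have final: "(\<Sum>n\<in>{n::int. \<tau>1 \<le> n \<and> n < \<tau>2 \<and>
                 cond_ent \<nu> (seq_s lam (nat (int N * n))) (seq_s lam (nat (int N * n - int N)))
                   \<ge> max ((2/3) * cond_ent \<nu> (seq_s lam (nat (int N * n + int N))) (seq_s lam (nat (int N * n))))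
                          (\<beta> / 6)}. cond_ent \<nu> (seq_s lam (nat (int N * n))) (seq_s lam (nat (int N * n - int N))))
            \<ge> \<beta> / 6 * (t2 - t1) - C"
      unfolding setEq using main unfolding a_def .
    show "let \<tau>1 = \<lceil>t1 / real N + 1 - 1 / (real N * log 2 (lam1 lam))\<rceil>;
           \<tau>2 = \<lfloor>t2 / real N\<rfloor>;
           NN = {n::int. \<tau>1 \<le> n \<and> n < \<tau>2 \<and>
                 cond_ent \<nu> (seq_s lam (nat (int N * n))) (seq_s lam (nat (int N * n - int N)))
                   \<ge> max ((2/3) * cond_ent \<nu> (seq_s lam (nat (int N * n + int N))) (seq_s lam (nat (int N * n))))
                          (\<beta> / 6)}
       in (\<Sum>n\<in>NN. cond_ent \<nu> (seq_s lam (nat (int N * n))) (seq_s lam (nat (int N * n - int N))))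
            \<ge> \<beta> / 6 * (t2 - t1) - C"
      unfolding Let_def \<tau>1_def[symmetric] \<tau>2_def[symmetric] using final .
  qed
qed


end
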